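(* There is a satisfiability-preserving reduction from $\mathsf{C\text{-}RASP}$ to $\mathsf{C\text{-}RASP}$ with depth at most 2: there is a computable transformation mapping each $\mathsf{C\text{-}RASP}$ formula $\varphi$ to a $\mathsf{C\text{-}RASP}$ formula $\varphi'$ of depth at most $2$ (possibly over an alphabet extended by fresh propositions) such that $\varphi$ is satisfiable iff $\varphi'$ is satisfiable.
   Context: $\mathsf{C\text{-}RASP}$ formulas over a finite alphabet $\Sigma$: $\phi ::= \sigma \mid \Diamond^{-}\phi \mid \Box^{-}\phi \mid \neg\phi \mid \phi_1\wedge\phi_2 \mid \sum_{t\in\mathcal{T}}\alpha_t t\sim k$, terms $t ::= \#[\phi] \mid c$, with $\alpha_t,k,c\in\mathbb{Z}$, ${\sim}\in\{<,\le,=,\ge,>\}$. At position $i$ of $w$: $w,i\models\sigma$ iff $w_i=\sigma$; $w,i\models\Diamond^{-}\phi$ iff $w,j\models\phi$ for some $j<i$; $w,i\models\Box^{-}\phi$ iff $w,j\models\phi$ for all $j\le i$; $\#[\phi]$ evaluates to $|\{j\in[1,i]: w,j\models\phi\}|$; comparisons are integer comparisons. $w\models\phi$ iff $w,|w|\models\phi$; $\phi$ is satisfiable iff some string satisfies it. Depth: $\mathrm{dp}(\sigma)=\mathrm{dp}(c)=0$, $\neg$ preserves depth, $\wedge$ takes the maximum, $\mathrm{dp}(\#[\phi])=\mathrm{dp}(\Diamond^{-}\phi)=\mathrm{dp}(\Box^{-}\phi)=\mathrm{dp}(\phi)+1$, and a comparison has the maximal depth of its terms. *)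

theory Defs
  imports Main "HOL-Library.Nat_Bijection"
begin

datatype cmp = Lt | Le | Eq | Ge | Gt

datatype cform =
    Sym nat
  | Dia cform
  | Box cform
  | Neg cform
  | Conj cform cform
  | Cmp "(int \<times> cterm) list" cmp int
and cterm =
    Cnt cform
  | Const int

fun cmp_sem :: "cmp \<Rightarrow> int \<Rightarrow> int \<Rightarrow> bool" where
  "cmp_sem Lt a b = (a < b)"
| "cmp_sem Le a b = (a \<le> b)"
| "cmp_sem Eq a b = (a = b)"
| "cmp_sem Ge a b = (a \<ge> b)"
| "cmp_sem Gt a b = (a > b)"

section \<open>Semantics (positions are 1-based)\<close>

fun holds :: "nat list \<Rightarrow> nat \<Rightarrow> cform \<Rightarrow> bool"
and tval :: "nat list \<Rightarrow> nat \<Rightarrow> cterm \<Rightarrow> int" where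
  "holds w i (Sym a) = (w ! (i - 1) = a)"
| "holds w i (Dia \<phi>) = (\<exists>j\<in>{1..<i}. holds w j \<phi>)"
| "holds w i (Box \<phi>) = (\<forall>j\<in>{1..i}. holds w j \<phi>)"
| "holds w i (Neg \<phi>) = (\<not> holds w i \<phi>)"
| "holds w i (Conj \<phi> \<psi>) = (holds w i \<phi> \<and> holds w i \<psi>)"
| "holds w i (Cmp ts c k) =
     cmp_sem c (sum_list (map (\<lambda>p. fst p * tval w i (snd p)) ts)) k"
| "tval w i (Cnt \<phi>) = int (card {j\<in>{1..i}. holds w j \<phi>})"
| "tval w i (Const c) = c"

definition models :: "nat list \<Rightarrow> cform \<Rightarrow> bool" where
  "models w \<phi> = holds w (length w) \<phi>"

definition satisfiable :: "nat set \<Rightarrow> cform \<Rightarrow> bool" where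
  "satisfiable \<Sigma> \<phi> = (\<exists>w. w \<noteq> [] \<and> set w \<subseteq> \<Sigma> \<and> models w \<phi>)"

fun letters :: "cform \<Rightarrow> nat set"
and tletters :: "cterm \<Rightarrow> nat set" where
  "letters (Sym a) = {a}"
| "letters (Dia \<phi>) = letters \<phi>"
| "letters (Box \<phi>) = letters \<phi>"
| "letters (Neg \<phi>) = letters \<phi>"
| "letters (Conj \<phi> \<psi>) = letters \<phi> \<union> letters \<psi>"
| "letters (Cmp ts c k) = (\<Union>p\<in>set ts. tletters (snd p))"
| "tletters (Cnt \<phi>) = letters \<phi>"
| "tletters (Const c) = {}"

fun dp :: "cform \<Rightarrow> nat"
and tdp :: "cterm \<Rightarrow> nat" where
  "dp (Sym a) = 0"
| "dp (Dia \<phi>) = Suc (dp \<phi>)"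
| "dp (Box \<phi>) = Suc (dp \<phi>)"
| "dp (Neg \<phi>) = dp \<phi>"
| "dp (Conj \<phi> \<psi>) = max (dp \<phi>) (dp \<psi>)"
| "dp (Cmp ts c k) = fold max (map (\<lambda>p. tdp (snd p)) ts) 0"
| "tdp (Cnt \<phi>) = Suc (dp \<phi>)"
| "tdp (Const c) = 0"

fun cmp_code :: "cmp \<Rightarrow> nat" where
  "cmp_code Lt = 0" | "cmp_code Le = 1" | "cmp_code Eq = 2" | "cmp_code Ge = 3" | "cmp_code Gt = 4"

fun enc :: "cform \<Rightarrow> nat"
and tenc :: "cterm \<Rightarrow> nat" where
  "enc (Sym a) = prod_encode (0, a)"
| "enc (Dia \<phi>) = prod_encode (1, enc \<phi>)"
| "enc (Box \<phi>) = prod_encode (2, enc \<phi>)"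
| "enc (Neg \<phi>) = prod_encode (3, enc \<phi>)"
| "enc (Conj \<phi> \<psi>) = prod_encode (4, prod_encode (enc \<phi>, enc \<psi>))"
| "enc (Cmp ts c k) = prod_encode (5, prod_encode
     (list_encode (map (\<lambda>p. prod_encode (int_encode (fst p), tenc (snd p))) ts),
      prod_encode (cmp_code c, int_encode k)))"
| "tenc (Cnt \<phi>) = prod_encode (0, enc \<phi>)"
| "tenc (Const c) = prod_encode (1, int_encode c)"

definition enc_inst :: "nat set \<Rightarrow> cform \<Rightarrow> nat" where
  "enc_inst \<Sigma> \<phi> = prod_encode (set_encode \<Sigma>, enc \<phi>)"

datatype recf = Zf | Sf | Proj nat | Comp recf "recf list" | PrimRec recf recf | Mu recf

inductive reval :: "recf \<Rightarrow> nat list \<Rightarrow> nat \<Rightarrow> bool" where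
  zero: "reval Zf xs 0"
| succ: "reval Sf (x # xs) (Suc x)"
| proj: "i < length xs \<Longrightarrow> reval (Proj i) xs (xs ! i)"
| comp: "length ys = length gs \<Longrightarrow> (\<forall>i<length gs. reval (gs ! i) xs (ys ! i))
           \<Longrightarrow> reval f ys z \<Longrightarrow> reval (Comp f gs) xs z"
| pr0: "reval f xs y \<Longrightarrow> reval (PrimRec f g) (0 # xs) y"
| prS: "reval (PrimRec f g) (n # xs) y \<Longrightarrow> reval g (n # y # xs) z
           \<Longrightarrow> reval (PrimRec f g) (Suc n # xs) z"
| mu: "reval f (n # xs) 0 \<Longrightarrow> (\<forall>m<n. \<exists>y. y > 0 \<and> reval f (m # xs) y)
           \<Longrightarrow> reval (Mu f) xs n"

end

theory Submission
  imports Defs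
begin

definition rc :: "nat \<Rightarrow> (nat list \<Rightarrow> nat) \<Rightarrow> bool" where
  "rc n f \<longleftrightarrow> (\<exists>r. \<forall>xs. length xs = n \<longrightarrow> reval r xs (f xs))"

lemma rc_cong: "rc n f \<Longrightarrow> (\<And>xs. length xs = n \<Longrightarrow> f xs = g xs) \<Longrightarrow> rc n g"
  unfolding rc_def by metis

lemma rc_zero: "rc n (\<lambda>_. 0)"
  unfolding rc_def by (auto intro: reval.zero)

lemma rc_proj: "i < n \<Longrightarrow> rc n (\<lambda>xs. xs ! i)"
  unfolding rc_def by (auto intro: reval.proj)

lemma rc_comp:
  assumes h: "rc k h" and len: "length gs = k" and gs: "\<forall>g\<in>set gs. rc n g"
  shows "rc n (\<lambda>xs. h (map (\<lambda>g. g xs) gs))"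
proof -
  obtain rh where rh: "\<forall>ys. length ys = k \<longrightarrow> reval rh ys (h ys)" using h unfolding rc_def by blast
  have "\<forall>i<length gs. \<exists>r. \<forall>xs. length xs = n \<longrightarrow> reval r xs ((gs!i) xs)"
    using gs unfolding rc_def by auto
  then obtain fr where fr: "\<forall>i<length gs. \<forall>xs. length xs = n \<longrightarrow> reval (fr i) xs ((gs!i) xs)"
    by metis
  define rs where "rs = map fr [0..<length gs]"
  show ?thesis unfolding rc_def
  proof (intro exI allI impI)
    fix xs :: "nat list" assume "length xs = n"
    show "reval (Comp rh rs) xs (h (map (\<lambda>g. g xs) gs))"
      by (rule reval.comp[where ys="map (\<lambda>g. g xs) gs"])
         (use fr rh len \<open>length xs = n\<close> in \<open>auto simp: rs_def\<close>)
  qed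
qed

lemma rc_compose1: "rc 1 (\<lambda>ys. h (ys!0)) \<Longrightarrow> rc n a \<Longrightarrow> rc n (\<lambda>xs. h (a xs))"
  using rc_comp[of 1 "\<lambda>ys. h (ys!0)" "[a]" n] by simp
lemma rc_compose2: "rc 2 (\<lambda>ys. h (ys!0) (ys!1)) \<Longrightarrow> rc n a \<Longrightarrow> rc n b \<Longrightarrow> rc n (\<lambda>xs. h (a xs) (b xs))"
  using rc_comp[of 2 "\<lambda>ys. h (ys!0) (ys!1)" "[a,b]" n] by simp
lemma rc_compose3: "rc 3 (\<lambda>ys. h (ys!0) (ys!1) (ys!2)) \<Longrightarrow> rc n a \<Longrightarrow> rc n b \<Longrightarrow> rc n c \<Longrightarrow>
   rc n (\<lambda>xs. h (a xs) (b xs) (c xs))"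
  using rc_comp[of 3 "\<lambda>ys. h (ys!0) (ys!1) (ys!2)" "[a,b,c]" n] by simp
lemma rc_compose4: "rc 4 (\<lambda>ys. h (ys!0) (ys!1) (ys!2) (ys!3)) \<Longrightarrow> rc n a \<Longrightarrow> rc n b \<Longrightarrow> rc n c \<Longrightarrow> rc n d \<Longrightarrow>
   rc n (\<lambda>xs. h (a xs) (b xs) (c xs) (d xs))"
  using rc_comp[of 4 "\<lambda>ys. h (ys!0) (ys!1) (ys!2) (ys!3)" "[a,b,c,d]" n] by simp
lemma rc_compose5: "rc 5 (\<lambda>ys. h (ys!0) (ys!1) (ys!2) (ys!3) (ys!4)) \<Longrightarrow> rc n a \<Longrightarrow> rc n b \<Longrightarrow> rc n c \<Longrightarrow> rc n d \<Longrightarrow> rc n e \<Longrightarrow>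
   rc n (\<lambda>xs. h (a xs) (b xs) (c xs) (d xs) (e xs))"
  using rc_comp[of 5 "\<lambda>ys. h (ys!0) (ys!1) (ys!2) (ys!3) (ys!4)" "[a,b,c,d,e]" n] by simp

lemma rc_Suc: assumes "rc n a" shows "rc n (\<lambda>xs. Suc (a xs))"
proof (rule rc_compose1[where h=Suc])
  show "rc 1 (\<lambda>ys. Suc (ys!0))" unfolding rc_def
  proof (intro exI allI impI)
    fix ys :: "nat list" assume "length ys = 1"
    then obtain x where "ys = [x]" by (cases ys) auto
    then show "reval Sf ys (Suc (ys!0))" by (auto intro: reval.succ)
  qed
qed (fact assms)

lemma rc_const: "rc n (\<lambda>_. c)"
  by (induction c) (auto intro: rc_zero rc_Suc)

lemma rc_pr:
  assumes f: "rc n f" and g: "rc (Suc (Suc n)) g"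
  shows "rc (Suc n) (\<lambda>xs. rec_nat (f (tl xs)) (\<lambda>i acc. g (i # acc # tl xs)) (hd xs))"
proof -
  obtain rf where rf: "\<forall>ys. length ys = n \<longrightarrow> reval rf ys (f ys)" using f unfolding rc_def by blast
  obtain rg where rg: "\<forall>ys. length ys = Suc (Suc n) \<longrightarrow> reval rg ys (g ys)" using g unfolding rc_def by blast
  have *: "reval (PrimRec rf rg) (k # ys) (rec_nat (f ys) (\<lambda>i acc. g (i # acc # ys)) k)"
    if "length ys = n" for k ys
    using that
  proof (induction k)
    case 0 then show ?case by (intro reval.pr0) (simp add: rf)
  next
    case (Suc k) then show ?case by (intro reval.prS[OF Suc.IH]) (simp_all add: rg)
  qed
  show ?thesis unfolding rc_def
  proof (intro exI allI impI)
    fix xs :: "nat list" assume "length xs = Suc n"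
    then obtain k ys where "xs = k # ys" "length ys = n" by (cases xs) auto
    then show "reval (PrimRec rf rg) xs (rec_nat (f (tl xs)) (\<lambda>i acc. g (i # acc # tl xs)) (hd xs))"
      using * by simp
  qed
qed

lemma rc_drop_nth: "m + i < n \<Longrightarrow> rc n (\<lambda>ys. drop m ys ! i)"
  by (rule rc_cong[OF rc_proj[of "m+i" n]]) auto

lemma rc_loop:
  assumes f: "rc n f" and k: "rc n k" and g: "rc (Suc (Suc n)) (\<lambda>ys. G (ys!0) (ys!1) (drop 2 ys))"
  shows "rc n (\<lambda>xs. rec_nat (f xs) (\<lambda>i acc. G i acc xs) (k xs))"
proof -
  have p: "rc (Suc n) (\<lambda>xs. rec_nat (f (tl xs)) (\<lambda>i acc. (\<lambda>ys. G (ys!0) (ys!1) (drop 2 ys)) (i # acc # tl xs)) (hd xs))"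
    by (rule rc_pr[OF f g])
  have gs: "\<forall>g\<in>set (k # map (\<lambda>i xs. xs ! i) [0..<n]). rc n g"
    using k by (auto intro: rc_proj)
  have "rc n (\<lambda>xs. (\<lambda>xs. rec_nat (f (tl xs)) (\<lambda>i acc. (\<lambda>ys. G (ys!0) (ys!1) (drop 2 ys)) (i # acc # tl xs)) (hd xs))
     (map (\<lambda>g. g xs) (k # map (\<lambda>i xs. xs ! i) [0..<n])))"
    by (rule rc_comp[OF p _ gs]) simp
  then show ?thesis
  proof (rule rc_cong)
    fix xs :: "nat list" assume "length xs = n"
    then have "map (\<lambda>g. g xs) (map (\<lambda>i xs. xs ! i) [0..<n]) = xs"
      using map_nth[of xs] by (simp add: comp_def)
    then show "(\<lambda>xs. rec_nat (f (tl xs)) (\<lambda>i acc. (\<lambda>ys. G (ys!0) (ys!1) (drop 2 ys)) (i # acc # tl xs)) (hd xs))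
     (map (\<lambda>g. g xs) (k # map (\<lambda>i xs. xs ! i) [0..<n])) = rec_nat (f xs) (\<lambda>i acc. G i acc xs) (k xs)"
      by simp
  qed
qed

lemmas rc_basic = rc_proj rc_const rc_Suc rc_drop_nth

lemma rn_add: "rec_nat b (\<lambda>i acc. Suc acc) a = a + (b::nat)" by (induction a) auto
lemma rn_pred: "rec_nat 0 (\<lambda>i acc. i) a = a - (1::nat)" by (induction a) auto
lemma rn_ifz: "rec_nat b (\<lambda>i acc. c) a = (if a = 0 then b else (c::nat))" by (induction a) auto

lemma rc_add: assumes "rc n a" "rc n b" shows "rc n (\<lambda>xs. a xs + b xs)"
proof (rule rc_compose2[where h="(+)", OF _ assms])
  have "rc 2 (\<lambda>ys. rec_nat (ys!1) (\<lambda>i acc. Suc acc) (ys!0))"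
    by (rule rc_loop[where G="\<lambda>i acc xs. Suc acc"]; intro rc_basic; simp)
  then show "rc 2 (\<lambda>ys. ys!0 + ys!1)" by (rule rc_cong) (simp only: rn_add)
qed

lemma rc_pred: assumes "rc n a" shows "rc n (\<lambda>xs. a xs - 1)"
proof (rule rc_compose1[where h="\<lambda>x. x - 1", OF _ assms])
  have "rc 1 (\<lambda>ys. rec_nat 0 (\<lambda>i acc. i) (ys!0))"
    by (rule rc_loop[where G="\<lambda>i acc xs. i"]; intro rc_basic; simp)
  then show "rc 1 (\<lambda>ys. ys!0 - 1)" by (rule rc_cong) (simp only: rn_pred)
qed

lemma rc_ifz: assumes "rc n c" "rc n a" "rc n b" shows "rc n (\<lambda>xs. if c xs = 0 then a xs else b xs)"
proof (rule rc_compose3[where h="\<lambda>x y z. if x = 0 then y else z", OF _ assms])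
  have "rc 3 (\<lambda>ys. rec_nat (ys!1) (\<lambda>i acc. ys!2) (ys!0))"
    by (rule rc_loop[where G="\<lambda>i acc xs. xs!2"]; intro rc_basic; simp)
  then show "rc 3 (\<lambda>ys. if ys!0 = 0 then ys!1 else ys!2)" by (rule rc_cong) (simp only: rn_ifz)
qed

lemma rn_sub: "rec_nat a (\<lambda>i acc. acc - 1) b = a - (b::nat)" by (induction b) auto
lemma rc_sub: assumes "rc n a" "rc n b" shows "rc n (\<lambda>xs. a xs - b xs)"
proof (rule rc_compose2[where h="(-)", OF _ assms])
  have "rc 2 (\<lambda>ys. rec_nat (ys!0) (\<lambda>i acc. acc - 1) (ys!1))"
    by (rule rc_loop[where G="\<lambda>i acc xs. acc - 1"]; intro rc_basic rc_pred; simp)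
  then show "rc 2 (\<lambda>ys. ys!0 - ys!1)" by (rule rc_cong) (simp only: rn_sub)
qed

lemma rn_mult: "rec_nat 0 (\<lambda>i acc. acc + a) b = a * (b::nat)" by (induction b) auto
lemma rc_mult: assumes "rc n a" "rc n b" shows "rc n (\<lambda>xs. a xs * b xs)"
proof (rule rc_compose2[where h="(*)", OF _ assms])
  have "rc 2 (\<lambda>ys. rec_nat 0 (\<lambda>i acc. acc + ys!0) (ys!1))"
    by (rule rc_loop[where G="\<lambda>i acc xs. acc + xs!0"]; intro rc_basic rc_add; simp)
  then show "rc 2 (\<lambda>ys. ys!0 * ys!1)" by (rule rc_cong) (simp only: rn_mult)
qed

lemma rn_pow2: "rec_nat 1 (\<lambda>i acc. acc + acc) a = (2::nat) ^ a" by (induction a) auto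
lemma rc_pow2: assumes "rc n a" shows "rc n (\<lambda>xs. 2 ^ a xs)"
proof (rule rc_compose1[where h="\<lambda>x. 2 ^ x", OF _ assms])
  have "rc 1 (\<lambda>ys. rec_nat 1 (\<lambda>i acc. acc + acc) (ys!0))"
    by (rule rc_loop[where G="\<lambda>i acc xs. acc + acc"]; intro rc_basic rc_add; simp)
  then show "rc 1 (\<lambda>ys. 2 ^ (ys!0))" by (rule rc_cong) (simp only: rn_pow2)
qed

definition rp :: "nat \<Rightarrow> (nat list \<Rightarrow> bool) \<Rightarrow> bool" where
  "rp n P \<longleftrightarrow> rc n (\<lambda>xs. if P xs then 1 else 0)"

lemma rc_if: assumes "rp n P" "rc n a" "rc n b" shows "rc n (\<lambda>xs. if P xs then a xs else b xs)"
  using rc_ifz[OF assms(1)[unfolded rp_def] assms(3) assms(2)] by (rule rc_cong) simp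

lemma rp_cong: "rc n f \<Longrightarrow> (\<And>xs. length xs = n \<Longrightarrow> f xs = (if P xs then 1 else 0)) \<Longrightarrow> rp n P"
  unfolding rp_def by (rule rc_cong)

lemma rp_eq: assumes "rc n a" "rc n b" shows "rp n (\<lambda>xs. a xs = b xs)"
  by (rule rp_cong[where f="\<lambda>xs. 1 - ((a xs - b xs) + (b xs - a xs))"]; (intro rc_basic rc_sub rc_add assms; simp)?; auto)

lemma rp_le: assumes "rc n a" "rc n b" shows "rp n (\<lambda>xs. a xs \<le> b xs)"
  by (rule rp_cong[where f="\<lambda>xs. 1 - (a xs - b xs)"]; (intro rc_basic rc_sub rc_add assms; simp)?; auto)

lemma rp_less: assumes "rc n a" "rc n b" shows "rp n (\<lambda>xs. a xs < b xs)"
  by (rule rp_cong[where f="\<lambda>xs. 1 - (Suc (a xs) - b xs)"]; (intro rc_basic rc_sub rc_add assms; simp)?; auto)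

lemma rp_and: assumes "rp n P" "rp n Q" shows "rp n (\<lambda>xs. P xs \<and> Q xs)"
  by (rule rp_cong[where f="\<lambda>xs. (if P xs then 1 else 0) * (if Q xs then 1 else 0)"],
    (intro rc_mult assms[unfolded rp_def])+, auto)

lemma rp_not: assumes "rp n P" shows "rp n (\<lambda>xs. \<not> P xs)"
  by (rule rp_cong[where f="\<lambda>xs. 1 - (if P xs then 1 else 0)"],
    (intro rc_sub rc_const assms[unfolded rp_def])+, auto)

lemma rp_true: "rp n (\<lambda>xs. True)"
  unfolding rp_def by (simp add: rc_const)

lemma rp_if: assumes "rp n P" "rp n Q" "rp n R" shows "rp n (\<lambda>xs. if P xs then Q xs else R xs)"
  by (rule rp_cong[where f="\<lambda>xs. if P xs then (if Q xs then 1 else 0) else (if R xs then 1 else 0)"],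
    (intro rc_if assms assms[unfolded rp_def])+, auto)

lemma rn_div: "(b::nat) > 0 \<Longrightarrow> rec_nat 0 (\<lambda>i acc. if Suc i * b \<le> a then Suc acc else acc) k = min k (a div b)"
proof (induction k)
  case (Suc k)
  have "Suc k * b \<le> a \<longleftrightarrow> Suc k \<le> a div b" using Suc.prems
    by (simp add: less_eq_div_iff_mult_less_eq)
  then show ?case using Suc by auto
qed simp

lemma rc_div: assumes "rc n a" "rc n b" shows "rc n (\<lambda>xs. a xs div b xs)"
proof (rule rc_compose2[where h="(div)", OF _ assms])
  have "rc 2 (\<lambda>ys. if ys!1 = 0 then 0 else rec_nat 0 (\<lambda>i acc. if Suc i * ys!1 \<le> ys!0 then Suc acc else acc) (ys!0))"
    by (intro rc_if rp_eq rc_basic rc_loop[where G="\<lambda>i acc xs. if Suc i * xs!1 \<le> xs!0 then Suc acc else acc"]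
       rc_mult rp_le; simp)
  then show "rc 2 (\<lambda>ys. ys!0 div ys!1)"
    by (rule rc_cong) (simp add: rn_div min_absorb2 div_le_dividend del: mult_Suc)
qed

lemma rc_mod: assumes "rc n a" "rc n b" shows "rc n (\<lambda>xs. a xs mod b xs)"
  by (rule rc_cong[where f="\<lambda>xs. a xs - b xs * (a xs div b xs)"], (intro rc_sub rc_mult rc_div assms)+,
    simp add: minus_mult_div_eq_mod)

lemma rp_odd: assumes "rc n a" shows "rp n (\<lambda>xs. odd (a xs))"
  by (rule rp_cong[where f="\<lambda>xs. a xs mod 2"], (intro rc_mod rc_const assms)+, simp add: odd_iff_mod_2_eq_one)

lemma rc_triangle: assumes "rc n a" shows "rc n (\<lambda>xs. triangle (a xs))"
  unfolding triangle_def by (intro rc_div rc_mult rc_Suc rc_const assms)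

definition pe :: "nat \<Rightarrow> nat \<Rightarrow> nat" where "pe a b = prod_encode (a, b)"
definition p1 :: "nat \<Rightarrow> nat" where "p1 z = fst (prod_decode z)"
definition p2 :: "nat \<Rightarrow> nat" where "p2 z = snd (prod_decode z)"

lemma p1_pe[simp]: "p1 (pe a b) = a" and p2_pe[simp]: "p2 (pe a b) = b"
  by (simp_all add: p1_def p2_def pe_def)
lemma pe_p[simp]: "pe (p1 z) (p2 z) = z"
  by (simp add: p1_def p2_def pe_def)
lemma pe_ge: "a + b \<le> pe a b"
proof -
  have "n \<le> triangle n" for n by (induction n) auto
  from this[of "a+b"] show ?thesis unfolding pe_def prod_encode_def by simp
qed
lemma p1_le: "p1 z \<le> z" and p2_le: "p2 z \<le> z"
  using pe_ge[of "p1 z" "p2 z"] by simp_all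
lemma pe_inj[simp]: "pe a b = pe c d \<longleftrightarrow> a = c \<and> b = d" by (simp add: pe_def)

lemma rc_pe: assumes "rc n a" "rc n b" shows "rc n (\<lambda>xs. pe (a xs) (b xs))"
  unfolding pe_def prod_encode_def by (simp, intro rc_add rc_triangle assms)

lemma triangle_mono: "i \<le> j \<Longrightarrow> triangle i \<le> triangle j"
  by (induction j rule: dec_induct) auto

lemma tri_ge: "n \<le> triangle n" by (induction n) auto

definition Kd :: "nat \<Rightarrow> nat" where
  "Kd z = rec_nat 0 (\<lambda>i acc. if triangle (Suc i) \<le> z then Suc acc else acc) z"

lemma Kd_eq: "Kd z = p1 z + p2 z \<and> p1 z = z - triangle (Kd z)"
proof -
  define a where "a = p1 z"
  define b where "b = p2 z"
  have "z = pe a b" unfolding a_def b_def by simp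
  then have z: "z = triangle (a + b) + a" by (simp add: pe_def prod_encode_def)
  have iff: "triangle (Suc i) \<le> z \<longleftrightarrow> i < a + b" for i
  proof
    assume "triangle (Suc i) \<le> z"
    show "i < a + b"
    proof (rule ccontr)
      assume "\<not> i < a + b"
      then have "triangle (Suc (a+b)) \<le> triangle (Suc i)" by (intro triangle_mono) simp
      then show False using \<open>triangle (Suc i) \<le> z\<close> z by simp
    qed
  next
    assume "i < a + b"
    then have "triangle (Suc i) \<le> triangle (a+b)" by (intro triangle_mono) simp
    then show "triangle (Suc i) \<le> z" using z by simp
  qed
  have "rec_nat 0 (\<lambda>i acc. if triangle (Suc i) \<le> z then Suc acc else acc) k = min k (a + b)" for k
    by (induction k) (simp_all add: iff del: triangle_Suc)
  moreover have "a + b \<le> z" using z tri_ge[of "a+b"] by simp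
  ultimately have "Kd z = a + b" unfolding Kd_def by simp
  then show ?thesis using z unfolding a_def b_def by simp
qed

lemma rc_Kd: assumes "rc n a" shows "rc n (\<lambda>xs. Kd (a xs))"
proof (rule rc_compose1[where h=Kd, OF _ assms])
  show "rc 1 (\<lambda>ys. Kd (ys!0))" unfolding Kd_def
    by (rule rc_loop[where G="\<lambda>i acc xs. if triangle (Suc i) \<le> xs!0 then Suc acc else acc"];
        intro rc_if rp_le rc_triangle rc_basic; simp)
qed

lemma p1_alt: "p1 z = z - triangle (Kd z)" by (rule conjunct2[OF Kd_eq])
lemma p2_alt: "p2 z = Kd z - p1 z"
proof -
  have "Kd z = p1 z + p2 z" by (rule conjunct1[OF Kd_eq])
  then show ?thesis by arith
qed

lemma rc_p1: assumes "rc n a" shows "rc n (\<lambda>xs. p1 (a xs))"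
  unfolding p1_alt by (intro rc_sub rc_triangle rc_Kd assms)
lemma rc_p2: assumes "rc n a" shows "rc n (\<lambda>xs. p2 (a xs))"
  unfolding p2_alt p1_alt by (intro rc_sub rc_triangle rc_Kd assms)

lemmas rcI = rc_proj rc_const rc_Suc rc_drop_nth rc_add rc_sub rc_mult rc_div rc_mod rc_pow2 rc_if
  rp_eq rp_le rp_less rp_and rp_not rp_true rp_if rp_odd rc_pe rc_p1 rc_p2

lemma prod_encode_pe[simp]: "prod_encode (a, b) = pe a b" by (simp add: pe_def)

definition FalseF :: cform where "FalseF = Cmp [] Lt 0"
definition TrueF :: cform where "TrueF = Neg FalseF"
definition OrF :: "cform \<Rightarrow> cform \<Rightarrow> cform" where "OrF A B = Neg (Conj (Neg A) (Neg B))"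
definition IffF :: "cform \<Rightarrow> cform \<Rightarrow> cform" where
  "IffF A B = Conj (Neg (Conj A (Neg B))) (Neg (Conj B (Neg A)))"

definition condv :: "nat \<Rightarrow> nat \<Rightarrow> nat \<Rightarrow> nat \<Rightarrow> nat \<Rightarrow> bool" where
  "condv s M sel x n \<longleftrightarrow> odd (s div 2 ^ (n mod M)) \<and>
     (if sel = 0 then n mod M = x else if sel = 1 then odd (n div M div 2 ^ x) else True)"

definition litF :: "nat \<Rightarrow> nat \<Rightarrow> nat \<Rightarrow> nat \<Rightarrow> nat \<Rightarrow> cform" where
  "litF s M N sel x = rec_nat FalseF (\<lambda>n acc. if condv s M sel x n then OrF (Sym n) acc else acc) N"

definition cmpdec :: "nat \<Rightarrow> cmp" where
  "cmpdec c = (if c = 0 then Lt else if c = 1 then Le else if c = 2 then Eq else if c = 3 then Ge else Gt)"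

definition gF :: "nat \<Rightarrow> nat \<Rightarrow> nat \<Rightarrow> nat \<Rightarrow> int \<times> cterm" where
  "gF s M N e = (int_decode (p1 e),
     if p1 (p2 e) = 0 then Cnt (litF s M N 1 (p2 (p2 e))) else Const (int_decode (p2 (p2 e))))"

definition TF :: "nat \<Rightarrow> nat \<Rightarrow> nat \<Rightarrow> nat \<Rightarrow> cform" where
  "TF s M N x = (if p1 x = 1 then Dia (litF s M N 1 (p2 x))
     else if p1 x = 2 then Box (litF s M N 1 (p2 x))
     else if p1 x = 3 then Neg (litF s M N 1 (p2 x))
     else if p1 x = 4 then Conj (litF s M N 1 (p1 (p2 x))) (litF s M N 1 (p2 (p2 x)))
     else if p1 x = 5 then Cmp (map (gF s M N) (list_decode (p1 (p2 x))))
                             (cmpdec (p1 (p2 (p2 x)))) (int_decode (p2 (p2 (p2 x))))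
     else litF s M N 0 (p2 x))"

definition CF :: "nat \<Rightarrow> nat \<Rightarrow> nat \<Rightarrow> nat \<Rightarrow> cform" where
  "CF s M N x = IffF (litF s M N 1 x) (TF s M N x)"

definition ConsF :: "nat \<Rightarrow> nat \<Rightarrow> nat \<Rightarrow> nat \<Rightarrow> cform" where
  "ConsF s M N m = rec_nat TrueF (\<lambda>x acc. Conj (CF s M N x) acc) m"

definition PhiG :: "nat \<Rightarrow> nat \<Rightarrow> nat \<Rightarrow> nat \<Rightarrow> nat \<Rightarrow> cform" where
  "PhiG s M N m e = Conj (Box (Conj (litF s M N 2 0) (ConsF s M N m))) (litF s M N 1 e)"

definition Nof :: "nat \<Rightarrow> nat \<Rightarrow> nat" where "Nof s e = (s + 1) * 2 ^ (e + 1)"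

definition Fred :: "nat set \<Rightarrow> cform \<Rightarrow> nat set \<times> cform" where
  "Fred \<Sigma> \<phi> = ({..<Nof (set_encode \<Sigma>) (enc \<phi>)},
     PhiG (set_encode \<Sigma>) (set_encode \<Sigma> + 1) (Nof (set_encode \<Sigma>) (enc \<phi>)) (enc \<phi> + 1) (enc \<phi>))"

lemma p2_less: "p1 x \<noteq> 0 \<Longrightarrow> p2 x < x"
  using pe_ge[of "p1 x" "p2 x"] by simp

lemma list_decode_lt: "e \<in> set (list_decode l) \<Longrightarrow> e < l"
proof (induction l rule: list_decode.induct)
  case (2 n)
  obtain a b where ab: "prod_decode n = (a, b)" by fastforce
  have "a \<le> n" "b \<le> n" using p1_le[of n] p2_le[of n] ab by (auto simp: p1_def p2_def)
  then show ?case using 2 ab by auto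
qed simp

function dec :: "nat \<Rightarrow> cform" where
  "dec x = (if p1 x = 1 then Dia (dec (p2 x))
     else if p1 x = 2 then Box (dec (p2 x))
     else if p1 x = 3 then Neg (dec (p2 x))
     else if p1 x = 4 then Conj (dec (p1 (p2 x))) (dec (p2 (p2 x)))
     else if p1 x = 5 then Cmp (map (\<lambda>e. (int_decode (p1 e),
            if p1 (p2 e) = 0 then Cnt (dec (p2 (p2 e))) else Const (int_decode (p2 (p2 e)))))
              (list_decode (p1 (p2 x))))
                             (cmpdec (p1 (p2 (p2 x)))) (int_decode (p2 (p2 (p2 x))))
     else Sym (p2 x))"
  by pat_completeness auto
termination
proof (relation "measure id")
  have lt: "p1 x \<noteq> 0 \<Longrightarrow> p2 x < x" for x by (rule p2_less)
  fix x e
  assume "p1 x \<noteq> 1" "p1 x \<noteq> 2" "p1 x \<noteq> 3" "p1 x \<noteq> 4" "p1 x = 5" "e \<in> set (list_decode (p1 (p2 x)))"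
  then have "e < p1 (p2 x)" by (simp add: list_decode_lt)
  moreover have "p2 (p2 e) \<le> e" using p2_le order_trans by blast
  moreover have "p1 (p2 x) \<le> p2 x" by (rule p1_le)
  moreover have "p2 x < x" using lt \<open>p1 x = 5\<close> by simp
  ultimately show "(p2 (p2 e), x) \<in> measure id" by simp
qed (use le_less_trans[OF p1_le p2_less] le_less_trans[OF p2_le p2_less] p2_less in auto)

declare dec.simps[simp del]

lemma cmpdec_code[simp]: "cmpdec (cmp_code c) = c" by (cases c) (auto simp: cmpdec_def)

definition tdec :: "nat \<Rightarrow> cterm" where
  "tdec c = (if p1 c = 0 then Cnt (dec (p2 c)) else Const (int_decode (p2 c)))"

lemma dec_enc_both: "dec (enc \<phi>) = \<phi> \<and> tdec (tenc t) = t"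
proof (rule cform_cterm.induct[of "\<lambda>\<phi>. dec (enc \<phi>) = \<phi>" "\<lambda>t. tdec (tenc t) = t"])
  fix ts :: "(int \<times> cterm) list" and c k
  assume IH: "\<And>p t. p \<in> set ts \<Longrightarrow> t \<in> Basic_BNFs.snds p \<Longrightarrow> tdec (tenc t) = t"
  have "map (\<lambda>e. (int_decode (p1 e),
            if p1 (p2 e) = 0 then Cnt (dec (p2 (p2 e))) else Const (int_decode (p2 (p2 e)))))
         (map (\<lambda>p. pe (int_encode (fst p)) (tenc (snd p))) ts) = ts"
    unfolding map_map
  proof (rule map_idI)
    fix p assume p: "p \<in> set ts"
    obtain a t where pat: "p = (a, t)" by fastforce
    have "t \<in> Basic_BNFs.snds p" using pat by (simp add: Basic_BNFs.prod_set_defs)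
    then have "tdec (tenc t) = t" using IH[OF p] by blast
    then show "((\<lambda>e. (int_decode (p1 e),
            if p1 (p2 e) = 0 then Cnt (dec (p2 (p2 e))) else Const (int_decode (p2 (p2 e))))) \<circ>
       (\<lambda>p. pe (int_encode (fst p)) (tenc (snd p)))) p = p"
      using pat by (simp add: tdec_def split: if_splits)
  qed
  then show "dec (enc (Cmp ts c k)) = Cmp ts c k" by (subst dec.simps) simp
qed (subst dec.simps tdec_def, simp)+

lemma dec_enc[simp]: "dec (enc \<phi>) = \<phi>" using dec_enc_both by blast

lemma holds_FalseF[simp]: "\<not> holds W j FalseF" by (simp add: FalseF_def)
lemma holds_TrueF[simp]: "holds W j TrueF" by (simp add: TrueF_def)
lemma holds_OrF[simp]: "holds W j (OrF A B) \<longleftrightarrow> holds W j A \<or> holds W j B" by (simp add: OrF_def)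
lemma holds_IffF[simp]: "holds W j (IffF A B) \<longleftrightarrow> (holds W j A \<longleftrightarrow> holds W j B)" by (auto simp: IffF_def)

lemma holds_litF: "holds W j (litF s M N sel x) \<longleftrightarrow> (\<exists>n<N. condv s M sel x n \<and> W!(j-1) = n)"
  unfolding litF_def by (induction N) (auto simp: less_Suc_eq)

lemma holds_ConsF: "holds W j (ConsF s M N m) \<longleftrightarrow> (\<forall>x<m. holds W j (CF s M N x))"
  unfolding ConsF_def by (induction m) (auto simp: less_Suc_eq)

lemma dec_unfold: "dec x = (if p1 x = 1 then Dia (dec (p2 x))
     else if p1 x = 2 then Box (dec (p2 x))
     else if p1 x = 3 then Neg (dec (p2 x))
     else if p1 x = 4 then Conj (dec (p1 (p2 x))) (dec (p2 (p2 x)))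
     else if p1 x = 5 then Cmp (map (\<lambda>e. (int_decode (p1 e),
            if p1 (p2 e) = 0 then Cnt (dec (p2 (p2 e))) else Const (int_decode (p2 (p2 e)))))
              (list_decode (p1 (p2 x))))
                             (cmpdec (p1 (p2 (p2 x)))) (int_decode (p2 (p2 (p2 x))))
     else Sym (p2 x))"
  by (rule dec.simps)

lemma TF_sem:
  fixes W :: "nat list" and M :: nat
  defines "w \<equiv> map (\<lambda>n. n mod M) W"
  assumes valid: "\<And>j. j \<in> {1..length W} \<Longrightarrow> W!(j-1) < N \<and> odd (s div 2^(W!(j-1) mod M))"
  and IH: "\<And>y j. y < x \<Longrightarrow> j \<in> {1..length W} \<Longrightarrow> holds W j (litF s M N 1 y) \<longleftrightarrow> holds w j (dec y)"
  and j: "j \<in> {1..length W}"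
  shows "holds W j (TF s M N x) \<longleftrightarrow> holds w j (dec x)"
proof -
  have p2x: "p1 x \<noteq> 0 \<Longrightarrow> p2 x < x" by (rule p2_less)
  have wj: "w!(i-1) = W!(i-1) mod M" if "i \<in> {1..length W}" for i
    using that unfolding w_def by auto
  have lw: "length w = length W" unfolding w_def by simp
  consider "p1 x = 1" | "p1 x = 2" | "p1 x = 3" | "p1 x = 4" | "p1 x = 5"
    | "p1 x \<noteq> 1 \<and> p1 x \<noteq> 2 \<and> p1 x \<noteq> 3 \<and> p1 x \<noteq> 4 \<and> p1 x \<noteq> 5" by blast
  then show ?thesis
  proof cases
    case 1
    then have "p2 x < x" using p2x by simp
    then show ?thesis using 1 IH[of "p2 x"] j
      by (subst dec_unfold) (auto simp: TF_def)
  next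
    case 2
    then have "p2 x < x" using p2x by simp
    then show ?thesis using 2 IH[of "p2 x"] j
      by (subst dec_unfold) (auto simp: TF_def)
  next
    case 3
    then have "p2 x < x" using p2x by simp
    then show ?thesis using 3 IH[of "p2 x"] j
      by (subst dec_unfold) (auto simp: TF_def)
  next
    case 4
    then have "p2 x < x" using p2x by simp
    then have "p1 (p2 x) < x" "p2 (p2 x) < x" using p1_le[of "p2 x"] p2_le[of "p2 x"] by linarith+
    then show ?thesis using 4 IH[of "p1 (p2 x)"] IH[of "p2 (p2 x)"] j
      by (subst dec_unfold) (auto simp: TF_def)
  next
    case 5
    then have "p2 x < x" using p2x by simp
    define L where "L = list_decode (p1 (p2 x))"
    have vx: "p2 (p2 e) < x" if "e \<in> set L" for e
    proof -
      have "e < p1 (p2 x)" using that list_decode_lt unfolding L_def by blast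
      moreover have "p2 (p2 e) \<le> e" using p2_le[of e] p2_le[of "p2 e"] by linarith
      moreover have "p1 (p2 x) \<le> p2 x" by (rule p1_le)
      ultimately show ?thesis using \<open>p2 x < x\<close> by linarith
    qed
    have cnt: "card {i \<in> {1..j}. holds W i (litF s M N 1 v)} = card {i \<in> {1..j}. holds w i (dec v)}"
      if "v < x" for v
    proof -
      have "{i \<in> {1..j}. holds W i (litF s M N 1 v)} = {i \<in> {1..j}. holds w i (dec v)}"
        using IH[OF that] j by auto
      then show ?thesis by simp
    qed
    have sums: "sum_list (map (\<lambda>p. fst p * tval W j (snd p)) (map (gF s M N) L)) =
      sum_list (map (\<lambda>p. fst p * tval w j (snd p)) (map (\<lambda>e. (int_decode (p1 e),
            if p1 (p2 e) = 0 then Cnt (dec (p2 (p2 e))) else Const (int_decode (p2 (p2 e))))) L))"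
      unfolding map_map
    proof (rule arg_cong[where f=sum_list], rule map_cong)
      fix e assume e: "e \<in> set L"
      show "((\<lambda>p. fst p * tval W j (snd p)) \<circ> gF s M N) e =
         ((\<lambda>p. fst p * tval w j (snd p)) \<circ> (\<lambda>e. (int_decode (p1 e),
            if p1 (p2 e) = 0 then Cnt (dec (p2 (p2 e))) else Const (int_decode (p2 (p2 e)))))) e"
        using cnt[OF vx[OF e]] by (simp add: gF_def)
    qed simp
    show ?thesis using 5 sums
      by (subst dec_unfold) (simp add: TF_def L_def)
  next
    case 6
    have "holds W j (litF s M N 0 (p2 x)) \<longleftrightarrow> W!(j-1) mod M = p2 x"
      using valid[OF j] by (auto simp: holds_litF condv_def)
    then show ?thesis using 6 wj[OF j]
      by (subst dec_unfold) (simp add: TF_def)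
  qed
qed

lemma invariant:
  assumes allj: "\<And>j. j \<in> {1..length W} \<Longrightarrow> holds W j (litF s M N 2 0) \<and> holds W j (ConsF s M N m)"
  shows "x < m \<Longrightarrow> j \<in> {1..length W} \<Longrightarrow>
     holds W j (litF s M N 1 x) \<longleftrightarrow> holds (map (\<lambda>n. n mod M) W) j (dec x)"
proof (induction x arbitrary: j rule: less_induct)
  case (less x)
  have valid: "W!(j-1) < N \<and> odd (s div 2^(W!(j-1) mod M))" if "j \<in> {1..length W}" for j
    using allj[OF that] by (auto simp: holds_litF condv_def)
  have "holds W j (CF s M N x)" using allj[OF less.prems(2)] less.prems(1) by (simp add: holds_ConsF)
  then have "holds W j (litF s M N 1 x) \<longleftrightarrow> holds W j (TF s M N x)" by (simp add: CF_def)
  also have "\<dots> \<longleftrightarrow> holds (map (\<lambda>n. n mod M) W) j (dec x)"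
    by (rule TF_sem[OF valid less.IH]) (use less.prems in auto)
  finally show ?case .
qed

lemma mem_iff: "finite \<Sigma> \<Longrightarrow> odd (set_encode \<Sigma> div 2^a) \<longleftrightarrow> a \<in> \<Sigma>"
  using set_encode_inverse[of \<Sigma>] unfolding set_decode_def by blast

lemma mem_lt: assumes "finite \<Sigma>" "a \<in> \<Sigma>" shows "a < set_encode \<Sigma> + 1"
proof -
  have "2^a \<le> sum ((^) (2::nat)) \<Sigma>" by (rule member_le_sum) (use assms in auto)
  moreover have "a < 2^a" by (rule less_exp)
  ultimately show ?thesis unfolding set_encode_def by linarith
qed

lemma set_encode_lessThan: "set_encode {..<m} = 2^m - 1"
proof (induction m)
  case (Suc m)
  have "{..<Suc m} = insert m {..<m}" by auto
  then have "set_encode {..<Suc m} = 2^m + set_encode {..<m}" by simp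
  then show ?case using Suc by simp
qed simp

lemma set_encode_bound: assumes "B \<subseteq> {..<m}" shows "set_encode B \<le> 2^m - 1"
proof -
  have "sum ((^) (2::nat)) B \<le> sum ((^) 2) {..<m}" by (rule sum_mono2) (use assms in auto)
  then show ?thesis using set_encode_lessThan[of m] unfolding set_encode_def by simp
qed

lemma dir1:
  assumes fin: "finite \<Sigma>" and s: "s = set_encode \<Sigma>" and M: "M = s + 1" and m: "m = e + 1"
    and e: "e = enc \<phi>" and W: "W \<noteq> []" "models W (PhiG s M N m e)"
  shows "satisfiable \<Sigma> \<phi>"
proof -
  define w where "w = map (\<lambda>n. n mod M) W"
  have h: "holds W (length W) (Box (Conj (litF s M N 2 0) (ConsF s M N m)))" "holds W (length W) (litF s M N 1 e)"
    using W(2) by (auto simp: models_def PhiG_def)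
  have allj: "holds W j (litF s M N 2 0) \<and> holds W j (ConsF s M N m)" if "j \<in> {1..length W}" for j
    using h(1) that by auto
  have inv: "holds W j (litF s M N 1 x) \<longleftrightarrow> holds w j (dec x)" if "x < m" "j \<in> {1..length W}" for x j
    unfolding w_def by (rule invariant[OF allj that])
  have "length W \<in> {1..length W}" using W(1) by (cases W) auto
  then have "holds w (length w) \<phi>" using inv[of e "length W"] h(2) m e by (simp add: w_def)
  moreover have "set w \<subseteq> \<Sigma>"
  proof
    fix a assume "a \<in> set w"
    then obtain i where i: "i < length W" "a = W!i mod M" unfolding w_def by (auto simp: in_set_conv_nth)
    have "Suc i \<in> {1..length W}" using i by auto
    then have "odd (s div 2^(W!i mod M))" using allj[of "Suc i"] by (auto simp: holds_litF condv_def)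
    then show "a \<in> \<Sigma>" using i mem_iff[OF fin] s by simp
  qed
  moreover have "w \<noteq> []" using W(1) by (simp add: w_def)
  ultimately show ?thesis unfolding satisfiable_def models_def by blast
qed

lemma dir2:
  assumes fin: "finite \<Sigma>" and s: "s = set_encode \<Sigma>" and M: "M = s + 1" and m: "m = e + 1"
    and e: "e = enc \<phi>" and N: "N = M * 2^m" and sat: "satisfiable \<Sigma> \<phi>"
  shows "\<exists>W. W \<noteq> [] \<and> set W \<subseteq> {..<N} \<and> models W (PhiG s M N m e)"
proof -
  obtain w where w: "w \<noteq> []" "set w \<subseteq> \<Sigma>" "models w \<phi>" using sat unfolding satisfiable_def by blast
  define B where "B j = {y. y < m \<and> holds w j (dec y)}" for j
  define lab where "lab j = w!(j-1) + M * set_encode (B j)" for j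
  define W where "W = map (\<lambda>i. lab (Suc i)) [0..<length w]"
  have lenW: "length W = length w" unfolding W_def by simp
  have Wj: "W!(j-1) = lab j" if "j \<in> {1..length w}" for j
    using that unfolding W_def by auto
  have wS: "w!(j-1) \<in> \<Sigma>" if "j \<in> {1..length w}" for j
    using that w(2) by (auto simp: subset_iff)
  have wM: "w!(j-1) < M" if "j \<in> {1..length w}" for j
    using mem_lt[OF fin wS[OF that]] s M by simp
  have finB: "finite (B j)" "B j \<subseteq> {..<m}" for j unfolding B_def by auto
  have modW: "W!(j-1) mod M = w!(j-1)" if "j \<in> {1..length w}" for j
    using Wj[OF that] wM[OF that] unfolding lab_def by simp
  have divW: "W!(j-1) div M = set_encode (B j)" if "j \<in> {1..length w}" for j
    using Wj[OF that] wM[OF that] unfolding lab_def by simp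
  have ltN: "W!(j-1) < N" if "j \<in> {1..length w}" for j
  proof -
    have "set_encode (B j) \<le> 2^m - 1" by (rule set_encode_bound[OF finB(2)])
    then have "M * set_encode (B j) \<le> M * (2^m - 1)" by simp
    moreover have "w!(j-1) < M" by (rule wM[OF that])
    moreover have "M * (2^m - 1) + M = M * 2^m" using diff_mult_distrib2[of M "2^m" 1]
      by (simp add: algebra_simps)
    ultimately show ?thesis using Wj[OF that] N unfolding lab_def by linarith
  qed
  have mapW: "map (\<lambda>n. n mod M) W = w"
  proof (rule nth_equalityI)
    show "length (map (\<lambda>n. n mod M) W) = length w" by (simp add: lenW)
    fix i assume "i < length (map (\<lambda>n. n mod M) W)"
    then have "Suc i \<in> {1..length w}" by (simp add: lenW)
    from modW[OF this] show "map (\<lambda>n. n mod M) W ! i = w ! i" using \<open>i < length (map (\<lambda>n. n mod M) W)\<close> by simp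
  qed
  have valid: "W!(j-1) < N \<and> odd (s div 2^(W!(j-1) mod M))" if "j \<in> {1..length W}" for j
    using that ltN wS mem_iff[OF fin] modW s lenW by auto
  have lit1: "holds W j (litF s M N 1 x) \<longleftrightarrow> holds w j (dec x)" if "x < m" "j \<in> {1..length W}" for x j
  proof -
    have "holds W j (litF s M N 1 x) \<longleftrightarrow> condv s M 1 x (W!(j-1))"
      using valid[OF that(2)] by (auto simp: holds_litF)
    also have "\<dots> \<longleftrightarrow> x \<in> B j"
      using valid[OF that(2)] divW[of j] that(2) lenW mem_iff[OF finB(1)] by (simp add: condv_def)
    finally show ?thesis using that(1) unfolding B_def by simp
  qed
  have lit2: "holds W j (litF s M N 2 0)" if "j \<in> {1..length W}" for j
    using valid[OF that] by (auto simp: holds_litF condv_def)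
  have cons: "holds W j (ConsF s M N m)" if j: "j \<in> {1..length W}" for j
  proof -
    have "holds W j (CF s M N x)" if "x < m" for x
    proof -
      have "holds W j (TF s M N x) \<longleftrightarrow> holds (map (\<lambda>n. n mod M) W) j (dec x)"
        by (rule TF_sem[OF valid]) (use lit1 that j mapW in auto)
      then show ?thesis using lit1[OF that j] mapW by (simp add: CF_def)
    qed
    then show ?thesis by (simp add: holds_ConsF)
  qed
  have "length W \<in> {1..length W}" using w(1) lenW by (cases w) auto
  then have "holds W (length W) (litF s M N 1 e)" using lit1[of e "length W"] m e w(3) lenW
    by (simp add: models_def)
  then have "models W (PhiG s M N m e)" using lit2 cons by (auto simp: models_def PhiG_def)
  moreover have "set W \<subseteq> {..<N}"
  proof
    fix a assume "a \<in> set W"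
    then obtain i where "i < length W" "a = W!i" by (auto simp: in_set_conv_nth)
    then show "a \<in> {..<N}" using ltN[of "Suc i"] lenW by auto
  qed
  moreover have "W \<noteq> []" using w(1) lenW by auto
  ultimately show ?thesis by blast
qed

lemma fold_max_le: "(\<forall>a\<in>set xs. a \<le> k) \<Longrightarrow> b \<le> (k::nat) \<Longrightarrow> fold max xs b \<le> k"
  by (induction xs arbitrary: b) auto

lemma dp_litF[simp]: "dp (litF s M N sel x) = 0"
  unfolding litF_def by (induction N) (auto simp: FalseF_def OrF_def)

lemma dp_TF: "dp (TF s M N x) \<le> 1"
proof -
  have "fold max (map (\<lambda>p. tdp (snd p)) (map (gF s M N) L)) 0 \<le> 1" for L
    by (rule fold_max_le) (auto simp: gF_def)
  then show ?thesis by (simp add: TF_def)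
qed

lemma dp_TF': "dp (TF s M N x) \<le> Suc 0" using dp_TF by simp

lemma dp_ConsF: "dp (ConsF s M N m) \<le> 1"
  unfolding ConsF_def
  by (induction m) (auto simp: TrueF_def FalseF_def CF_def IffF_def dp_TF')

lemma dp_PhiG: "dp (PhiG s M N m e) \<le> 2"
  using dp_ConsF[of s M N m] by (simp add: PhiG_def)

lemma letters_litF: "letters (litF s M N sel x) \<subseteq> {..<N}"
  unfolding litF_def by (induction N) (auto simp: FalseF_def OrF_def)

lemma letters_TF: "letters (TF s M N x) \<subseteq> {..<N}"
  by (auto simp: TF_def gF_def split: if_splits dest!: subsetD[OF letters_litF])

lemma letters_ConsF: "letters (ConsF s M N m) \<subseteq> {..<N}"
  unfolding ConsF_def
  by (induction m) (use letters_TF letters_litF in \<open>auto simp: TrueF_def FalseF_def CF_def IffF_def\<close>)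

lemma letters_PhiG: "letters (PhiG s M N m e) \<subseteq> {..<N}"
  using letters_ConsF[of s M N m] letters_litF[of s M N] by (auto simp: PhiG_def)

definition OrC :: "nat \<Rightarrow> nat \<Rightarrow> nat" where "OrC A B = pe 3 (pe 4 (pe (pe 3 A) (pe 3 B)))"

definition litC :: "nat \<Rightarrow> nat \<Rightarrow> nat \<Rightarrow> nat \<Rightarrow> nat \<Rightarrow> nat" where
  "litC s M N sel x = rec_nat (enc FalseF) (\<lambda>n acc. if condv s M sel x n then OrC (pe 0 n) acc else acc) N"

lemma enc_litF: "enc (litF s M N sel x) = litC s M N sel x"
  unfolding litF_def litC_def by (induction N) (auto simp: OrF_def OrC_def)

lemma rc_litC0: "rc 5 (\<lambda>ys. litC (ys!0) (ys!1) (ys!2) (ys!3) (ys!4))"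
  unfolding litC_def condv_def OrC_def
  by (intro rcI rc_loop; simp)

lemma rc_litC: assumes "rc n a" "rc n b" "rc n c" "rc n d" "rc n e"
  shows "rc n (\<lambda>xs. litC (a xs) (b xs) (c xs) (d xs) (e xs))"
  by (rule rc_compose5[where h=litC, OF rc_litC0 assms])

definition gC :: "nat \<Rightarrow> nat \<Rightarrow> nat \<Rightarrow> nat \<Rightarrow> nat" where
  "gC s M N e = pe (p1 e) (if p1 (p2 e) = 0 then pe 0 (litC s M N 1 (p2 (p2 e))) else pe 1 (p2 (p2 e)))"

lemma enc_gF: "pe (int_encode (fst (gF s M N e))) (tenc (snd (gF s M N e))) = gC s M N e"
  by (simp add: gF_def gC_def enc_litF)

lemma rc_gC: assumes "rc n a" "rc n b" "rc n c" "rc n d"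
  shows "rc n (\<lambda>xs. gC (a xs) (b xs) (c xs) (d xs))"
proof (rule rc_compose4[where h=gC, OF _ assms])
  show "rc 4 (\<lambda>ys. gC (ys!0) (ys!1) (ys!2) (ys!3))"
    unfolding gC_def by (intro rcI rc_litC; simp)
qed

definition lstep :: "(nat \<Rightarrow> nat) \<Rightarrow> nat \<Rightarrow> nat" where
  "lstep h st = (if p1 st = 0 then st else pe (p2 (p1 st - 1)) (Suc (pe (h (p1 (p1 st - 1))) (p2 st))))"

lemma rn_funpow: "rec_nat st (\<lambda>i acc. f acc) k = (f ^^ k) st"
  by (induction k) auto

lemma funpow_fix: "f x = x \<Longrightarrow> (f ^^ k) x = x"
  by (induction k) auto

lemma lstep_run: "length xs \<le> k \<Longrightarrow>
  (lstep h ^^ k) (pe (list_encode xs) (list_encode ys)) = pe 0 (list_encode (rev (map h xs) @ ys))"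
proof (induction xs arbitrary: ys k)
  case Nil
  have "lstep h (pe 0 (list_encode ys)) = pe 0 (list_encode ys)" by (simp add: lstep_def)
  then show ?case by (simp add: funpow_fix)
next
  case (Cons x xs)
  then obtain k' where k: "k = Suc k'" "length xs \<le> k'" by (cases k) auto
  have "lstep h (pe (list_encode (x # xs)) (list_encode ys)) = pe (list_encode xs) (list_encode (h x # ys))"
    by (simp add: lstep_def)
  then show ?case using Cons.IH[OF k(2), of "h x # ys"] k(1)
    by (simp add: funpow_Suc_right del: funpow.simps)
qed

lemma length_le_list_encode: "length xs \<le> list_encode xs"
proof (induction xs)
  case (Cons x xs)
  then show ?case using pe_ge[of x "list_encode xs"] by simp
qed simp

definition MapC :: "nat \<Rightarrow> nat \<Rightarrow> nat \<Rightarrow> nat \<Rightarrow> nat" where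
  "MapC s M N L = p2 (rec_nat (pe (p2 (rec_nat (pe L 0) (\<lambda>i acc. lstep (gC s M N) acc) L)) 0)
      (\<lambda>i acc. lstep (\<lambda>z. z) acc) L)"

lemma MapC_eq: "MapC s M N L = list_encode (map (gC s M N) (list_decode L))"
proof -
  define xs where "xs = list_decode L"
  have L: "L = list_encode xs" unfolding xs_def by simp
  have len: "length xs \<le> L" unfolding L by (rule length_le_list_encode)
  have 1: "rec_nat (pe L 0) (\<lambda>i acc. lstep (gC s M N) acc) L = pe 0 (list_encode (rev (map (gC s M N) xs)))"
    unfolding rn_funpow using lstep_run[OF len, of "gC s M N" "[]"] by (simp add: L[symmetric])
  have 2: "rec_nat (pe (list_encode (rev (map (gC s M N) xs))) 0) (\<lambda>i acc. lstep (\<lambda>z. z) acc) L =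
     pe 0 (list_encode (map (gC s M N) xs))"
    unfolding rn_funpow using lstep_run[of "rev (map (gC s M N) xs)" L "\<lambda>z. z" "[]"] len by simp
  show ?thesis unfolding MapC_def 1 using 2 by (simp add: xs_def)
qed

lemma rc_MapC: assumes "rc n a" "rc n b" "rc n c" "rc n d"
  shows "rc n (\<lambda>xs. MapC (a xs) (b xs) (c xs) (d xs))"
proof (rule rc_compose4[where h=MapC, OF _ assms])
  show "rc 4 (\<lambda>ys. MapC (ys!0) (ys!1) (ys!2) (ys!3))"
    unfolding MapC_def lstep_def by (intro rcI rc_gC rc_loop; simp)
qed

definition TC :: "nat \<Rightarrow> nat \<Rightarrow> nat \<Rightarrow> nat \<Rightarrow> nat" where
  "TC s M N x = (if p1 x = 1 then pe 1 (litC s M N 1 (p2 x))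
     else if p1 x = 2 then pe 2 (litC s M N 1 (p2 x))
     else if p1 x = 3 then pe 3 (litC s M N 1 (p2 x))
     else if p1 x = 4 then pe 4 (pe (litC s M N 1 (p1 (p2 x))) (litC s M N 1 (p2 (p2 x))))
     else if p1 x = 5 then pe 5 (pe (MapC s M N (p1 (p2 x)))
        (pe (if p1 (p2 (p2 x)) \<le> 4 then p1 (p2 (p2 x)) else 4) (p2 (p2 (p2 x)))))
     else litC s M N 0 (p2 x))"

lemma cmp_code_dec: "cmp_code (cmpdec c) = (if c \<le> 4 then c else 4)"
  by (simp add: cmpdec_def)

lemma enc_TF: "enc (TF s M N x) = TC s M N x"
proof -
  have *: "map ((\<lambda>p. pe (int_encode (fst p)) (tenc (snd p))) \<circ> gF s M N) L = map (gC s M N) L" for L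
    by (simp add: enc_gF comp_def)
  show ?thesis
    by (simp add: TF_def TC_def enc_litF MapC_eq cmp_code_dec *)
qed

lemma rc_TC: assumes "rc n a" "rc n b" "rc n c" "rc n d"
  shows "rc n (\<lambda>xs. TC (a xs) (b xs) (c xs) (d xs))"
proof (rule rc_compose4[where h=TC, OF _ assms])
  show "rc 4 (\<lambda>ys. TC (ys!0) (ys!1) (ys!2) (ys!3))"
    unfolding TC_def by (intro rcI rc_litC rc_MapC; simp)
qed

definition IffC :: "nat \<Rightarrow> nat \<Rightarrow> nat" where
  "IffC A B = pe 4 (pe (pe 3 (pe 4 (pe A (pe 3 B)))) (pe 3 (pe 4 (pe B (pe 3 A)))))"

definition CC :: "nat \<Rightarrow> nat \<Rightarrow> nat \<Rightarrow> nat \<Rightarrow> nat" where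
  "CC s M N x = IffC (litC s M N 1 x) (TC s M N x)"

definition ConsC :: "nat \<Rightarrow> nat \<Rightarrow> nat \<Rightarrow> nat \<Rightarrow> nat" where
  "ConsC s M N m = rec_nat (enc TrueF) (\<lambda>x acc. pe 4 (pe (CC s M N x) acc)) m"

lemma enc_ConsF: "enc (ConsF s M N m) = ConsC s M N m"
  unfolding ConsF_def ConsC_def
  by (induction m) (simp_all add: CF_def CC_def IffF_def IffC_def enc_litF enc_TF)

lemma rc_ConsC: assumes "rc n a" "rc n b" "rc n c" "rc n d"
  shows "rc n (\<lambda>xs. ConsC (a xs) (b xs) (c xs) (d xs))"
proof (rule rc_compose4[where h=ConsC, OF _ assms])
  show "rc 4 (\<lambda>ys. ConsC (ys!0) (ys!1) (ys!2) (ys!3))"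
    unfolding ConsC_def CC_def IffC_def by (intro rcI rc_litC rc_TC rc_loop; simp)
qed

definition PhiC :: "nat \<Rightarrow> nat \<Rightarrow> nat \<Rightarrow> nat \<Rightarrow> nat \<Rightarrow> nat" where
  "PhiC s M N m e = pe 4 (pe (pe 2 (pe 4 (pe (litC s M N 2 0) (ConsC s M N m)))) (litC s M N 1 e))"

lemma enc_PhiG: "enc (PhiG s M N m e) = PhiC s M N m e"
  by (simp add: PhiG_def PhiC_def enc_litF enc_ConsF)

definition Gc :: "nat \<Rightarrow> nat" where
  "Gc z = pe (2 ^ Nof (p1 z) (p2 z) - 1) (PhiC (p1 z) (p1 z + 1) (Nof (p1 z) (p2 z)) (p2 z + 1) (p2 z))"

lemma Gc_correct: "Gc (enc_inst \<Sigma> \<phi>) = enc_inst (fst (Fred \<Sigma> \<phi>)) (snd (Fred \<Sigma> \<phi>))"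
  by (simp add: Gc_def enc_inst_def Fred_def set_encode_lessThan enc_PhiG)

lemma rc_Gc: "rc 1 (\<lambda>xs. Gc (xs!0))"
  unfolding Gc_def PhiC_def Nof_def by (intro rcI rc_litC rc_ConsC; simp)

theorem propositionD1:
  "\<exists>F :: nat set \<Rightarrow> cform \<Rightarrow> nat set \<times> cform.
     (\<exists>r. \<forall>\<Sigma> \<phi>. finite \<Sigma> \<and> letters \<phi> \<subseteq> \<Sigma> \<longrightarrow>
            reval r [enc_inst \<Sigma> \<phi>] (enc_inst (fst (F \<Sigma> \<phi>)) (snd (F \<Sigma> \<phi>)))) \<and>
     (\<forall>\<Sigma> \<phi>. finite \<Sigma> \<and> letters \<phi> \<subseteq> \<Sigma> \<longrightarrow>
        finite (fst (F \<Sigma> \<phi>)) \<and> \<Sigma> \<subseteq> fst (F \<Sigma> \<phi>) \<and>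
        letters (snd (F \<Sigma> \<phi>)) \<subseteq> fst (F \<Sigma> \<phi>) \<and>
        dp (snd (F \<Sigma> \<phi>)) \<le> 2 \<and>
        (satisfiable \<Sigma> \<phi> \<longleftrightarrow> satisfiable (fst (F \<Sigma> \<phi>)) (snd (F \<Sigma> \<phi>))))"
proof (intro exI[where x=Fred] conjI allI impI)
  obtain r where r: "\<forall>xs. length xs = 1 \<longrightarrow> reval r xs (Gc (xs!0))"
    using rc_Gc unfolding rc_def by blast
  have "reval r [enc_inst \<Sigma> \<phi>] (enc_inst (fst (Fred \<Sigma> \<phi>)) (snd (Fred \<Sigma> \<phi>)))" for \<Sigma> \<phi>
    using r[rule_format, of "[enc_inst \<Sigma> \<phi>]"] Gc_correct[of \<Sigma> \<phi>] by simp
  then show "\<exists>r. \<forall>\<Sigma> \<phi>. finite \<Sigma> \<and> letters \<phi> \<subseteq> \<Sigma> \<longrightarrow>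
            reval r [enc_inst \<Sigma> \<phi>] (enc_inst (fst (Fred \<Sigma> \<phi>)) (snd (Fred \<Sigma> \<phi>)))"
    by blast
next
  fix \<Sigma> \<phi> assume a: "finite \<Sigma> \<and> letters \<phi> \<subseteq> \<Sigma>"
  then have fin: "finite \<Sigma>" by blast
  define s where "s = set_encode \<Sigma>"
  define e where "e = enc \<phi>"
  define N where "N = Nof s e"
  have F: "Fred \<Sigma> \<phi> = ({..<N}, PhiG s (s+1) N (e+1) e)"
    unfolding Fred_def s_def e_def N_def by simp
  have N2: "N = (s + 1) * 2 ^ (e + 1)" unfolding N_def Nof_def by simp
  show "finite (fst (Fred \<Sigma> \<phi>))" using F by simp
  show "\<Sigma> \<subseteq> fst (Fred \<Sigma> \<phi>)"
  proof
    fix a assume "a \<in> \<Sigma>"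
    then have "a < s + 1" using mem_lt[OF fin] s_def by simp
    moreover have "s + 1 \<le> N" unfolding N2
      using mult_le_mono2[of 1 "2 ^ (e + 1)" "s + 1"] by simp
    ultimately show "a \<in> fst (Fred \<Sigma> \<phi>)" using F by simp
  qed
  show "letters (snd (Fred \<Sigma> \<phi>)) \<subseteq> fst (Fred \<Sigma> \<phi>)" using F letters_PhiG by simp
  show "dp (snd (Fred \<Sigma> \<phi>)) \<le> 2" using F dp_PhiG by simp
  show "satisfiable \<Sigma> \<phi> \<longleftrightarrow> satisfiable (fst (Fred \<Sigma> \<phi>)) (snd (Fred \<Sigma> \<phi>))"
  proof
    assume "satisfiable \<Sigma> \<phi>"
    from dir2[OF fin s_def refl refl e_def N2 this]
    show "satisfiable (fst (Fred \<Sigma> \<phi>)) (snd (Fred \<Sigma> \<phi>))"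
      using F unfolding satisfiable_def by auto
  next
    assume "satisfiable (fst (Fred \<Sigma> \<phi>)) (snd (Fred \<Sigma> \<phi>))"
    then obtain W where "W \<noteq> []" "models W (PhiG s (s+1) N (e+1) e)"
      using F unfolding satisfiable_def by auto
    then show "satisfiable \<Sigma> \<phi>" by (rule dir1[OF fin s_def refl refl e_def])
  qed
qed

end
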